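(* Let $\alpha$ be a non-zero algebraic number of degree at most $2$. If $\gamma\in\mathbb Q(\alpha)$, $\gamma\neq0$, satisfies $M(\gamma)>M(\alpha)$, then $M(\gamma)>M(\alpha)+\dfrac{1}{16\,M(\alpha)^4}$.
   Context: For a non-zero algebraic number $\gamma$ with minimal polynomial $A\prod_{n=1}^N(x-\gamma_n)$ over $\mathbb Z$ (primitive, $A>0$), its Mahler measure is $M(\gamma)=A\prod_{n=1}^N\max\{1,|\gamma_n|\}$. *)

theory Defs
  imports "HOL-Analysis.Analysis" "HOL-Computational_Algebra.Computational_Algebra"
begin

definition min_int_poly :: "complex \<Rightarrow> int poly" where
  "min_int_poly \<alpha> = (THE p. irreducible p \<and> content p = 1 \<and> lead_coeff p > 0 \<and>
      poly (map_poly of_int p) \<alpha> = 0)"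

definition mahler_poly :: "int poly \<Rightarrow> real" where
  "mahler_poly p = \<bar>real_of_int (lead_coeff p)\<bar> *
      (\<Prod>r\<in>#proots (map_poly of_int p :: complex poly). max 1 (cmod r))"

definition mahler_measure :: "complex \<Rightarrow> real" where
  "mahler_measure \<gamma> = mahler_poly (min_int_poly \<gamma>)"

definition alg_degree :: "complex \<Rightarrow> nat" where
  "alg_degree \<alpha> = degree (min_int_poly \<alpha>)"

definition is_subfield :: "complex set \<Rightarrow> bool" where
  "is_subfield F \<longleftrightarrow> 0 \<in> F \<and> 1 \<in> F \<and>
     (\<forall>x\<in>F. \<forall>y\<in>F. x + y \<in> F \<and> x * y \<in> F) \<and> (\<forall>x\<in>F. - x \<in> F) \<and>
     (\<forall>x\<in>F. x \<noteq> 0 \<longrightarrow> inverse x \<in> F)"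

definition rat_adjoin :: "complex \<Rightarrow> complex set" where
  "rat_adjoin \<alpha> = \<Inter>{F. is_subfield F \<and> \<alpha> \<in> F}"

end

theory Submission imports Defs "Berlekamp_Zassenhaus.Factor_Bound" begin
hide_const (open) Mahler_Measure.mahler_measure



interpretation of_rat_c: field_hom' "of_rat :: rat \<Rightarrow> complex" by unfold_locales

lemma coprime_no_common_root:
  fixes p q :: "int poly" and x :: complex
  assumes "gcd p q = 1" "poly (map_poly of_int p) x = 0" "poly (map_poly of_int q) x = 0"
  shows False
proof -
  have "gcd (of_int_poly p :: rat poly) (of_int_poly q) = 1"
    using gcd_rat_to_gcd_int[of p q] assms(1) by simp
  hence "map_poly (of_rat :: rat \<Rightarrow> complex) (gcd (of_int_poly p :: rat poly) (of_int_poly q)) = 1" by simp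
  hence g: "gcd (of_int_poly p :: complex poly) (of_int_poly q) = 1"
    unfolding of_rat_c.map_poly_gcd by (simp add: map_poly_map_poly o_def)
  have "[:-x,1:] dvd of_int_poly p" "[:-x,1:] dvd (of_int_poly q :: complex poly)"
    using assms(2,3) poly_eq_0_iff_dvd by blast+
  hence "[:-x,1:] dvd (1 :: complex poly)" using g by (metis gcd_greatest)
  thus False using is_unit_iff_degree[of "[:-x,1:]"] by simp
qed

lemma minpoly_unique:
  fixes p q :: "int poly" and x :: complex
  assumes ip: "irreducible p" and iq: "irreducible q" and lp: "lead_coeff p > 0" and lq: "lead_coeff q > 0"
    and rp: "poly (map_poly of_int p) x = 0" and rq: "poly (map_poly of_int q) x = 0"
  shows "p = q"
proof -
  have dv: "a dvd b" if ia: "irreducible a" and ra: "poly (map_poly of_int a) x = 0"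
    and rb: "poly (map_poly of_int b) x = 0" for a b :: "int poly"
  proof -
    obtain k where k: "a = gcd a b * k" using gcd_dvd1[of a b] unfolding dvd_def by blast
    from irreducibleD[OF ia k] show ?thesis
    proof
      assume "is_unit (gcd a b)"
      hence "gcd a b = 1" by (simp add: is_unit_gcd)
      from coprime_no_common_root[OF this ra rb] show ?thesis ..
    next
      assume "is_unit k"
      hence "gcd a b * k dvd gcd a b" by simp
      hence "a dvd gcd a b" using k by simp
      thus ?thesis by (meson dvd_trans gcd_dvd2)
    qed
  qed
  have n: "normalize r = r" if "lead_coeff r > 0" for r :: "int poly"
    using that by (simp add: normalize_poly_def)
  show ?thesis
    by (rule associated_eqI[OF dv[OF ip rp rq] dv[OF iq rq rp] n[OF lp] n[OF lq]])
qed

lemma ipoly_prod_mset_zero: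
  fixes x :: complex
  assumes "poly (map_poly of_int (prod_mset M)) x = 0"
  shows "\<exists>q\<in>#M. poly (map_poly of_int q) x = 0"
  using assms
proof (induction M)
  case empty
  then show ?case by simp
next
  case (add q M)
  then show ?case by (auto simp: of_int_poly_hom.hom_mult)
qed

lemma minpoly_exists:
  fixes x :: complex
  assumes "algebraic x"
  shows "\<exists>p. irreducible p \<and> content p = 1 \<and> lead_coeff p > 0 \<and> poly (map_poly of_int p) x = 0"
proof -
  obtain p :: "int poly" where p0: "p \<noteq> 0" and px: "poly (of_int_poly p) x = 0"
    using algebraicE'[OF assms] by blast
  have pr: "normalize (prod_mset (prime_factorization p)) = normalize p" using p0 by (rule prod_mset_prime_factorization_weak)
  have "p dvd prod_mset (prime_factorization p)" using associatedD2[OF pr] .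
  then obtain r where r: "prod_mset (prime_factorization p) = p * r" by (auto simp: dvd_def)
  have "poly (map_poly of_int (prod_mset (prime_factorization p))) x = 0"
    unfolding r by (simp add: of_int_poly_hom.hom_mult px)
  from ipoly_prod_mset_zero[OF this] obtain q where qin: "q \<in># prime_factorization p"
    and qx: "poly (map_poly of_int q) x = 0" by blast
  have pq: "prime q" using qin by (simp add: in_prime_factors_imp_prime)
  hence iq: "irreducible q" by (intro prime_elem_imp_irreducible prime_imp_prime_elem)
  have q0: "q \<noteq> 0" using pq by auto
  have nq: "normalize q = q" using pq by simp
  have "unit_factor q = 1" using unit_factor_normalize[OF q0] nq by simp
  hence "poly.coeff (unit_factor q) 0 = 1" by simp
  hence "unit_factor (lead_coeff q) = 1" unfolding unit_factor_poly_def by simp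
  hence lq: "lead_coeff q > 0" by (simp add: sgn_1_pos)
  have dq: "degree q \<noteq> 0"
  proof
    assume "degree q = 0"
    then obtain c where "q = [:c:]" by (metis degree_eq_zeroE)
    thus False using q0 qx by simp
  qed
  have "content q = 1" using irreducible_imp_primitive[OF iq dq] by (simp add: primitive_iff_content_eq_1)
  with iq lq qx show ?thesis by blast
qed

lemma min_int_poly_props:
  fixes x :: complex
  assumes "algebraic x"
  shows "irreducible (min_int_poly x) \<and> content (min_int_poly x) = 1 \<and> lead_coeff (min_int_poly x) > 0 \<and>
     poly (map_poly of_int (min_int_poly x)) x = 0"
proof -
  obtain p where p: "irreducible p \<and> content p = 1 \<and> lead_coeff p > 0 \<and> poly (map_poly of_int p) x = 0"
    using minpoly_exists[OF assms] by blast
  show ?thesis unfolding min_int_poly_def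
    apply (rule theI[of _ p])
    using p apply blast
    using p minpoly_unique by blast
qed

lemma min_int_poly_eqI:
  fixes x :: complex
  assumes "irreducible p" "content p = 1" "lead_coeff p > 0" "poly (map_poly of_int p) x = 0"
  shows "min_int_poly x = p"
  unfolding min_int_poly_def
  apply (rule the_equality)
  using assms apply blast
  using assms minpoly_unique by blast



lemma lead_of_int_poly_c: "lead_coeff (map_poly (of_int :: int \<Rightarrow> complex) p) = of_int (lead_coeff p)"
  by simp

lemma mahler_quad:
  fixes p :: "int poly" and a :: int and r1 r2 :: complex
  assumes eq: "map_poly of_int p = Polynomial.smult (of_int a) ([:-r1,1:] * [:-r2,1:])" and a0: "a \<noteq> 0"
  shows "mahler_poly p = \<bar>of_int a\<bar> * max 1 (cmod r1) * max 1 (cmod r2)"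
proof -
  have "lead_coeff (map_poly (of_int :: int \<Rightarrow> complex) p) = of_int a"
    unfolding eq by (simp add: lead_coeff_mult)
  hence la: "lead_coeff p = a" by simp
  have pr: "proots (map_poly (of_int :: int \<Rightarrow> complex) p) = {#r1, r2#}"
    unfolding eq using a0 
    by (subst proots_smult, simp, subst proots_mult, simp, simp, simp only: proots_linear_factor minus_minus, simp)
  show ?thesis unfolding mahler_poly_def la pr by simp
qed

lemma mahler_lin:
  fixes p :: "int poly" and a :: int and r1 :: complex
  assumes eq: "map_poly of_int p = Polynomial.smult (of_int a) [:-r1,1:]" and a0: "a \<noteq> 0"
  shows "mahler_poly p = \<bar>of_int a\<bar> * max 1 (cmod r1)"
proof -
  have "lead_coeff (map_poly (of_int :: int \<Rightarrow> complex) p) = of_int a"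
    unfolding eq by simp
  hence la: "lead_coeff p = a" by simp
  have pr: "proots (map_poly (of_int :: int \<Rightarrow> complex) p) = {#r1#}"
    unfolding eq using a0 by (subst proots_smult, simp, simp only: proots_linear_factor minus_minus)
  show ?thesis unfolding mahler_poly_def la pr by simp
qed


lemma rat_case:
  fixes g :: rat assumes g0: "g \<noteq> 0"
  shows "(\<exists>k::int. mahler_measure (of_rat g :: complex) = of_int k \<and> k \<ge> 1) \<and> degree (min_int_poly (of_rat g :: complex)) = 1"
proof -
  obtain n m where q: "quotient_of g = (n, m)" by (cases "quotient_of g") auto
  have m0: "m > 0" using quotient_of_denom_pos[OF q] .
  note cop = quotient_of_coprime[OF q]
  have gnm: "g = of_int n / of_int m" using quotient_of_div[OF q] .
  define p where "p = [:-n, m:]"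
  have cg: "(of_rat g :: complex) = of_int n / of_int m" unfolding gnm by (simp add: of_rat_divide)
  have eq: "map_poly (of_int :: int \<Rightarrow> complex) p = Polynomial.smult (of_int m) [:-(of_rat g),1:]"
    unfolding p_def cg using m0 by simp
  have root: "poly (map_poly of_int p) (of_rat g :: complex) = 0" unfolding eq by simp
  have cont: "content p = 1" unfolding p_def using cop m0 by (simp add: content_pCons coprime_iff_gcd_eq_1)
  have deg: "degree p = 1" unfolding p_def using m0 by simp
  have irr: "irreducible p"
    using irreducible_primitive_connect[of p] linear_irreducible\<^sub>d[OF deg] cont
    by (simp add: primitive_iff_content_eq_1)
  have lc: "lead_coeff p > 0" unfolding p_def using m0 by simp
  have mp: "min_int_poly (of_rat g) = p" by (rule min_int_poly_eqI[OF irr cont lc root])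
  have M: "mahler_measure (of_rat g) = \<bar>of_int m\<bar> * max 1 (cmod (of_rat g))"
    unfolding Defs.mahler_measure_def mp using mahler_lin[OF eq] m0 by simp
  have "cmod (of_rat g) = \<bar>of_int n\<bar> / of_int m" unfolding cg using m0 by (simp add: norm_divide)
  hence mc: "real_of_int m * cmod (of_rat g) = \<bar>of_int n\<bar>" using m0 by simp
  have key: "real_of_int m * max 1 (cmod (of_rat g)) = real_of_int (max m \<bar>n\<bar>)"
  proof (cases "cmod (of_rat g :: complex) \<ge> 1")
    case True
    have "real_of_int m \<le> \<bar>real_of_int n\<bar>" using mult_left_mono[OF True, of "real_of_int m"] m0 mc by simp
    hence "m \<le> \<bar>n\<bar>" by linarith
    thus ?thesis using True mc by simp
  next
    case False
    have "real_of_int m * cmod (of_rat g :: complex) < real_of_int m" using False m0 by simp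
    hence "\<bar>n\<bar> < m" using mc by linarith
    thus ?thesis using False by simp
  qed
  hence "mahler_measure (of_rat g :: complex) = of_int (max m \<bar>n\<bar>)" unfolding M using m0 by simp
  thus ?thesis using m0 mp deg by (intro conjI exI[of _ "max m \<bar>n\<bar>"]) auto
qed



lemma rat_adjoin_repr:
  fixes \<alpha> :: complex and b c :: rat
  assumes rel: "\<alpha>^2 + of_rat b * \<alpha> + of_rat c = 0" and irr: "\<alpha> \<notin> \<rat>"
  shows "rat_adjoin \<alpha> \<subseteq> {of_rat r + of_rat s * \<alpha> | r s. True}"
proof -
  define S where "S = {of_rat r + of_rat s * \<alpha> | r s. True}"
  have a2: "\<alpha>*\<alpha> = - of_rat b * \<alpha> - of_rat c"
  proof -
    have "\<alpha>*\<alpha> = (\<alpha>^2 + of_rat b * \<alpha> + of_rat c) - of_rat b * \<alpha> - of_rat c" by (simp add: power2_eq_square)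
    thus ?thesis using rel by simp
  qed
  have mem: "of_rat r + of_rat s * \<alpha> \<in> S" for r s unfolding S_def by blast
  have sub: "is_subfield S" unfolding is_subfield_def
  proof (intro conjI ballI impI)
    show "0 \<in> S" using mem[of 0 0] by simp
    show "1 \<in> S" using mem[of 1 0] by simp
    fix x y assume x: "x \<in> S" and y: "y \<in> S"
    obtain r1 s1 where x1: "x = of_rat r1 + of_rat s1 * \<alpha>" using x unfolding S_def by blast
    obtain r2 s2 where y1: "y = of_rat r2 + of_rat s2 * \<alpha>" using y unfolding S_def by blast
    show "x + y \<in> S" using mem[of "r1 + r2" "s1 + s2"] unfolding x1 y1 by (simp add: of_rat_add algebra_simps)
    have "x * y = of_rat r1 * of_rat r2 + (of_rat r1 * of_rat s2 + of_rat r2 * of_rat s1) * \<alpha> + of_rat s1 * of_rat s2 * (\<alpha> * \<alpha>)"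
      unfolding x1 y1 by (simp add: algebra_simps)
    also have "\<dots> = of_rat (r1 * r2 - s1 * s2*c) + of_rat (r1 * s2 + r2 * s1 - s1 * s2*b) * \<alpha>"
      unfolding a2 by (simp add: of_rat_add of_rat_mult of_rat_diff algebra_simps)
    finally show "x * y \<in> S" using mem by simp
  next
    fix x assume x: "x \<in> S"
    obtain r s where x1: "x = of_rat r + of_rat s * \<alpha>" using x unfolding S_def by blast
    show "- x \<in> S" using mem[of "-r" "-s"] unfolding x1 by (simp add: of_rat_minus)
  next
    fix x assume x: "x \<in> S" and x0: "x \<noteq> 0"
    obtain r s where x1: "x = of_rat r + of_rat s * \<alpha>" using x unfolding S_def by blast
    define u where "u = r - s * b"
    define N where "N = r * u + s * s * c"
    have "x * (of_rat u - of_rat s * \<alpha>) = of_rat r * of_rat u + (of_rat s * of_rat u - of_rat r * of_rat s) * \<alpha> - of_rat s * of_rat s * (\<alpha> * \<alpha>)"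
      unfolding x1 by (simp add: algebra_simps)
    also have "\<dots> = of_rat N"
      unfolding a2 u_def N_def by (simp add: of_rat_add of_rat_mult of_rat_diff algebra_simps)
    finally have prod: "x * (of_rat u - of_rat s * \<alpha>) = of_rat N" .
    show "inverse x \<in> S"
    proof (cases "N = 0")
      case False
      have "inverse x = (of_rat u - of_rat s * \<alpha>) / of_rat N"
        using prod False x0 by (simp add: field_simps)
      also have "\<dots> = of_rat (u / N) + of_rat (- s / N) * \<alpha>"
        by (simp add: of_rat_divide of_rat_minus diff_divide_distrib)
      finally show ?thesis using mem by simp
    next
      case True
      hence "of_rat u - of_rat s * \<alpha> = 0" using prod x0 by simp
      hence us: "of_rat u = of_rat s * \<alpha>" by simp
      show ?thesis
      proof (cases "s = 0")
        case True
        hence "r = 0" using us unfolding u_def by simp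
        thus ?thesis using x0 x1 True by simp
      next
        case False
        hence "\<alpha> = of_rat (u / s)" using us by (simp add: of_rat_divide field_simps)
        thus ?thesis using irr by auto
      qed
    qed
  qed
  have "\<alpha> \<in> S" using mem[of 0 1] by simp
  hence "rat_adjoin \<alpha> \<subseteq> S" unfolding rat_adjoin_def using sub by blast
  thus ?thesis unfolding S_def .
qed



lemma rat_square_int:
  fixes m :: rat and z :: int
  assumes "m^2 = of_int z"
  shows "\<exists>k::int. m = of_int k"
proof -
  obtain a b where q: "quotient_of m = (a, b)" by (cases "quotient_of m") auto
  have b0: "b > 0" using quotient_of_denom_pos[OF q] .
  note cop = quotient_of_coprime[OF q]
  have mab: "m = of_int a / of_int b" using quotient_of_div[OF q] .
  have "of_int a ^ 2 = (of_int z * of_int b ^ 2 :: rat)" using assms b0 unfolding mab by (simp add: field_simps power_divide)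
  hence e: "a^2 = z * b^2" by (metis of_int_eq_iff of_int_mult of_int_power)
  have "b dvd a^2" unfolding e by (simp add: power2_eq_square)
  moreover have "algebraic_semidom_class.coprime (a^2) b" using cop by simp
  ultimately have "b dvd 1" by (metis coprime_common_divisor dvd_refl)
  hence "b = 1" using b0 by simp
  thus ?thesis using mab by (intro exI[of _ a]) simp
qed

lemma final_ineq:
  fixes \<delta> :: complex and D e1 e2 z1 z2 :: int and M1 M2 :: real and q1 q2 :: rat
  assumes dD: "\<delta>^2 = of_int D" and dq: "\<delta> = 0 \<or> \<delta> \<notin> \<rat>"
    and h1: "complex_of_real (2*M1) = of_int e1 + of_rat q1 * \<delta>" and z1: "q1^2 * of_int D = of_int z1"
    and c1: "cmod (of_int e1 - of_rat q1 * \<delta>) \<le> 2*M1"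
    and h2: "complex_of_real (2*M2) = of_int e2 + of_rat q2 * \<delta>" and z2: "q2^2 * of_int D = of_int z2"
    and c2: "cmod (of_int e2 - of_rat q2 * \<delta>) \<le> 2*M2"
    and M12: "M1 > M2" and M2: "M2 \<ge> 1"
  shows "M1 > M2 + 1 / (16 * M2^4)"
proof -
  have "(q1 * q2 * of_int D)^2 = of_int (z1 * z2)"
    using z1 z2 by (simp add: power2_eq_square algebra_simps) (metis mult.assoc mult.commute)
  then obtain k where k: "q1 * q2 * of_int D = of_int k" using rat_square_int by blast
  define t where "t = complex_of_real (2*(M1 - M2))"
  define u where "u = of_int (e1 - e2) - of_rat (q1 - q2) * \<delta>"
  have t: "t = of_int (e1 - e2) + of_rat (q1 - q2) * \<delta>" unfolding t_def using h1 h2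
    by (simp add: of_rat_diff algebra_simps)
  have "t * u = of_int (e1 - e2)^2 - of_rat (q1^2 * of_int D) - of_rat (q2^2 * of_int D) + 2 * of_rat (q1 * q2 * of_int D)"
    unfolding t u_def by (simp add: dD[symmetric] of_rat_diff of_rat_mult power2_eq_square algebra_simps)
  also have "\<dots> = of_int ((e1 - e2)^2 - z1 - z2 + 2 * k)" unfolding z1 z2 k by simp
  finally have tu: "t * u = of_int ((e1 - e2)^2 - z1 - z2 + 2 * k)" .
  have t0: "t \<noteq> 0" unfolding t_def using M12 by simp
  have K0: "(e1 - e2)^2 - z1 - z2 + 2 * k \<noteq> 0"
  proof
    assume K: "(e1 - e2)^2 - z1 - z2 + 2 * k = 0"
    hence "u = 0" using tu t0 by simp
    hence ue: "of_int (e1 - e2) = of_rat (q1 - q2) * \<delta>" unfolding u_def by simp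
    show False
    proof (cases "q1 = q2")
      case True
      hence "e1 = e2" using ue by simp
      thus False using t0 t True by simp
    next
      case False
      hence nz: "(of_rat (q1 - q2) :: complex) \<noteq> 0" by simp
      have "(of_rat (of_int (e1 - e2)) :: complex) = of_rat (q1 - q2) * \<delta>" using ue by (simp add: of_rat_diff)
      hence "\<delta> = of_rat (of_int (e1 - e2)) / of_rat (q1 - q2)" using nz by (simp add: field_simps)
      hence "\<delta> = of_rat (of_int (e1 - e2) / (q1 - q2))" by (simp only: of_rat_divide)
      hence "\<delta> \<in> \<rat>" by simp
      hence "\<delta> = 0" using dq by blast
      hence "t = 0" using ue t by simp
      thus False using t0 by simp
    qed
  qed
  have "cmod (t * u) \<ge> 1" unfolding tu using K0 by (simp del: of_int_diff of_int_add of_int_mult of_int_power)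
  hence A: "cmod t * cmod u \<ge> 1" by (simp add: norm_mult)
  have "u = (of_int e1 - of_rat q1 * \<delta>) - (of_int e2 - of_rat q2 * \<delta>)" unfolding u_def by (simp add: of_rat_diff algebra_simps)
  hence "cmod u \<le> cmod (of_int e1 - of_rat q1 * \<delta>) + cmod (of_int e2 - of_rat q2 * \<delta>)" by (metis norm_triangle_ineq4)
  hence B: "cmod u \<le> 2*M1 + 2*M2" using c1 c2 by linarith
  have C: "cmod t = 2*(M1 - M2)" unfolding t_def norm_of_real using M12 by simp
  have D: "2*(M1 - M2) * (2*M1 + 2*M2) \<ge> 1"
  proof -
    have "cmod t * cmod u \<le> 2*(M1 - M2) * (2*M1 + 2*M2)" unfolding C using B M12 by (intro mult_left_mono) auto
    thus ?thesis using A by linarith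
  qed
  hence E: "4 * M1^2 \<ge> 4 * M2^2 + 1" by (simp add: power2_eq_square algebra_simps)
  define \<epsilon> where "\<epsilon> = 1 / (16 * M2^4)"
  have M4: "M2^4 \<ge> 1" "M2^3 \<ge> 1" using M2 by (simp_all add: one_le_power)
  have eps0: "\<epsilon> > 0" unfolding \<epsilon>_def using M2 by simp
  have eps1: "\<epsilon> \<le> 1/16" unfolding \<epsilon>_def using M4 by (intro divide_left_mono) auto
  have "M2 * \<epsilon> = 1 / (16 * M2^3)" unfolding \<epsilon>_def using M2 by (simp add: field_simps eval_nat_numeral)
  also have "\<dots> \<le> 1/16" using M4 M2 by (intro divide_left_mono) auto
  finally have eps2: "M2 * \<epsilon> \<le> 1/16" .
  show ?thesis
  proof (rule ccontr)
    assume "\<not> ?thesis"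
    hence "M1 \<le> M2 + \<epsilon>" unfolding \<epsilon>_def by simp
    hence "M1^2 \<le> (M2 + \<epsilon>)^2" using M12 M2 by (intro power_mono) auto
    also have "\<dots> = M2^2 + 2 * (M2 * \<epsilon>) + \<epsilon> * \<epsilon>" by (simp add: power2_eq_square algebra_simps)
    also have "\<dots> \<le> M2^2 + 2 * (1/16) + (1/16) * (1/16)"
      using eps1 eps2 eps0 M2 by (intro add_mono mult_mono) auto
    finally show False using E by simp
  qed
qed


lemma poly_deg1_eq: "degree p \<le> 1 \<Longrightarrow> p = [:poly.coeff p 0, poly.coeff p 1:]"
  by (intro poly_eqI) (auto simp: coeff_pCons split: nat.split intro: coeff_eq_0)

lemma poly_deg2_eq: "degree p \<le> 2 \<Longrightarrow> p = [:poly.coeff p 0, poly.coeff p 1, poly.coeff p 2:]"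
  by (intro poly_eqI) (auto simp: coeff_pCons numeral_2_eq_2 split: nat.split intro: coeff_eq_0)

lemma poly_of_int_cnj: "poly (map_poly of_int p) (cnj z) = cnj (poly (map_poly of_int p) (z::complex))"
  by (induct p) (simp_all add: map_poly_pCons)

definition good :: "complex \<Rightarrow> int \<Rightarrow> real \<Rightarrow> bool" where
  "good \<delta> D M \<longleftrightarrow> (\<exists>e::int. \<exists>q::rat. \<exists>z::int. complex_of_real (2*M) = of_int e + of_rat q * \<delta> \<and>
      q^2 * of_int D = of_int z \<and> cmod (of_int e - of_rat q * \<delta>) \<le> 2*M) \<and> M \<ge> 1"

lemma good_int: "M = of_int k \<Longrightarrow> k \<ge> 1 \<Longrightarrow> good \<delta> D M"
  unfolding good_def by (intro conjI exI[of _ "2*k"] exI[of _ 0]) auto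


lemma quad_case:
  fixes \<alpha> \<gamma> :: complex and A B C :: int and r s :: rat
  assumes A0: "A > 0" and rel: "of_int A * \<alpha>^2 + of_int B * \<alpha> + of_int C = 0" and irr: "\<alpha> \<notin> \<rat>"
    and g: "\<gamma> = of_rat r + of_rat s * \<alpha>" and s0: "s \<noteq> 0"
  shows "good (2 * of_int A * \<alpha> + of_int B) (B^2 - 4*A*C) (mahler_measure \<gamma>)"
proof -
  define b where "b = (of_int B / of_int A :: rat)"
  define c where "c = (of_int C / of_int A :: rat)"
  define \<alpha>' where "\<alpha>' = - of_rat b - \<alpha>"
  have Ane: "(of_int A :: complex) \<noteq> 0" using A0 by simp
  have ofb: "(of_rat b :: complex) = of_int B / of_int A" unfolding b_def by (simp add: of_rat_divide)
  have ofc: "(of_rat c :: complex) = of_int C / of_int A" unfolding c_def by (simp add: of_rat_divide)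
  have rel2: "\<alpha>^2 + of_rat b * \<alpha> + of_rat c = 0"
  proof -
    have "of_int A * (\<alpha>^2 + of_rat b * \<alpha> + of_rat c) = of_int A * \<alpha>^2 + of_int B * \<alpha> + of_int C"
      unfolding ofb ofc using Ane by (simp add: algebra_simps)
    thus ?thesis using rel Ane by simp
  qed
  have sum_a: "\<alpha> + \<alpha>' = - of_rat b" unfolding \<alpha>'_def by simp
  have "\<alpha> * \<alpha>' = - (\<alpha>^2 + of_rat b * \<alpha> + of_rat c) + of_rat c" unfolding \<alpha>'_def by (simp add: algebra_simps power2_eq_square)
  hence prod_a: "\<alpha> * \<alpha>' = of_rat c" using rel2 by simp
  define \<gamma>' where "\<gamma>' = of_rat r + of_rat s * \<alpha>'"
  define T where "T = 2 * r - s * b"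
  define N where "N = r * r - r * s * b + s * s * c"
  have "\<gamma> + \<gamma>' = 2 * of_rat r + of_rat s * (\<alpha> + \<alpha>')" unfolding g \<gamma>'_def by (simp add: algebra_simps)
  also have "\<dots> = of_rat T" unfolding sum_a T_def by (simp add: of_rat_diff of_rat_mult algebra_simps)
  finally have sumg: "\<gamma> + \<gamma>' = of_rat T" .
  have "\<gamma> * \<gamma>' = of_rat r * of_rat r + of_rat r * of_rat s * (\<alpha> + \<alpha>') + of_rat s * of_rat s * (\<alpha> * \<alpha>')"
    unfolding g \<gamma>'_def by (simp add: algebra_simps)
  also have "\<dots> = of_rat N" unfolding sum_a prod_a N_def by (simp add: of_rat_diff of_rat_mult of_rat_add algebra_simps)
  finally have prodg: "\<gamma> * \<gamma>' = of_rat N" .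
  have ratfree: "of_rat r + of_rat s * x \<notin> \<rat>" if "x \<notin> \<rat>" for x :: complex
  proof
    assume "of_rat r + of_rat s * x \<in> \<rat>"
    then obtain y where y: "of_rat r + of_rat s * x = of_rat y" by (metis Rats_cases)
    have "x = of_rat ((y - r) / s)" using y s0 by (simp add: of_rat_divide of_rat_diff field_simps)
    thus False using that by simp
  qed
  have gq: "\<gamma> \<notin> \<rat>" unfolding g using ratfree[OF irr] .
  have a'q: "\<alpha>' \<notin> \<rat>"
  proof
    assume "\<alpha>' \<in> \<rat>"
    then obtain y where "\<alpha>' = of_rat y" by (metis Rats_cases)
    hence "\<alpha> = of_rat (- b - y)" unfolding \<alpha>'_def by (simp add: of_rat_diff of_rat_minus algebra_simps)
    thus False using irr by simp
  qed
  have g'q: "\<gamma>' \<notin> \<rat>" unfolding \<gamma>'_def using ratfree[OF a'q] .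
  define rp where "rp = ([:N, -T, 1:] :: rat poly)"
  obtain d p where dp: "rat_to_normalized_int_poly rp = (d, p)" by (cases "rat_to_normalized_int_poly rp") auto
  note rn = rat_to_normalized_int_poly[OF dp]
  have rp0: "rp \<noteq> 0" unfolding rp_def by simp
  have rpd: "rp = Polynomial.smult d (map_poly of_int p)" using rn by simp
  have d0: "d > 0" using rn by simp
  have cp: "content p = 1" using rn rp0 by simp
  have degp: "degree p = 2" using rn(4) unfolding rp_def by simp
  define a' where "a' = poly.coeff p 2"
  define b' where "b' = poly.coeff p 1"
  define c' where "c' = poly.coeff p 0"
  have co: "poly.coeff rp i = d * of_int (poly.coeff p i)" for i
    using rpd by (simp add: of_int_hom.coeff_map_poly_hom)
  have ca: "d * of_int a' = 1" using co[of 2] unfolding rp_def a'_def by (simp add: numeral_2_eq_2)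
  have cb: "d * of_int b' = -T" using co[of 1] unfolding rp_def b'_def by simp
  have cc: "d * of_int c' = N" using co[of 0] unfolding rp_def c'_def by simp
  have "0 < d * of_int a'" using ca by simp
  hence "(0::rat) < of_int a'" using d0 by (metis zero_less_mult_pos)
  hence a'pos: "a' > 0" by simp
  have Te: "T = - (d * of_int b')" using cb by simp
  have "of_int a' * T = - (d * of_int a') * of_int b'" unfolding Te by (simp add: algebra_simps)
  hence Tb: "of_int a' * T = - of_int b'" using ca by simp
  have "of_int a' * N = (d * of_int a') * of_int c'" unfolding cc[symmetric] by (simp add: algebra_simps)
  hence Nc: "of_int a' * N = of_int c'" using ca by simp
  have Tc: "of_int a' * (\<gamma> + \<gamma>') = - (of_int b' :: complex)"
    using arg_cong[OF Tb, of "of_rat :: rat \<Rightarrow> complex"] sumg by (simp add: of_rat_mult of_rat_minus)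
  have Nc': "of_int a' * (\<gamma> * \<gamma>') = (of_int c' :: complex)"
    using arg_cong[OF Nc, of "of_rat :: rat \<Rightarrow> complex"] prodg by (simp add: of_rat_mult)
  have pform: "p = [:c', b', a':]" using poly_deg2_eq[of p] degp unfolding a'_def b'_def c'_def by simp
  have peq: "map_poly of_int p = Polynomial.smult (of_int a') ([:-\<gamma>,1:] * [:-\<gamma>',1:] :: complex poly)"
  proof -
    have L: "map_poly of_int p = [:of_int c', of_int b', of_int a' :: complex:]"
      by (rule poly_eqI) (simp add: of_int_hom.coeff_map_poly_hom pform coeff_pCons split: nat.split)
    have R: "Polynomial.smult (of_int a') ([:-\<gamma>,1:] * [:-\<gamma>',1:]) = [:of_int a' * (\<gamma> * \<gamma>'), - (of_int a' * (\<gamma> + \<gamma>')), of_int a' :: complex:]"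
      by (simp add: algebra_simps)
    show ?thesis unfolding L R Tc Nc' by simp
  qed
  have roots: "z = \<gamma> \<or> z = \<gamma>'" if "poly (map_poly of_int p) z = 0" for z
  proof -
    have "poly (map_poly of_int p) z = of_int a' * ((z - \<gamma>) * (z - \<gamma>'))" unfolding peq by (simp add: algebra_simps)
    thus ?thesis using that a'pos by simp
  qed
  have irrd: "irreducible\<^sub>d p"
  proof (rule irreducible\<^sub>dI)
    show "0 < degree p" using degp by simp
    fix q r' :: "int poly"
    assume as: "0 < degree q" "degree q < degree p" "0 < degree r'" "degree r' < degree p" "p = q * r'"
    hence dq: "degree q = 1" using degp by simp
    define q0 where "q0 = poly.coeff q 0"
    define q1 where "q1 = poly.coeff q 1"
    have "q \<noteq> 0" using dq by auto
    hence "lead_coeff q \<noteq> 0" by simp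
    hence q1: "q1 \<noteq> 0" using dq unfolding q1_def by simp
    have qf: "q = [:q0, q1:]" using poly_deg1_eq[of q] dq unfolding q0_def q1_def by simp
    define x0 :: rat where "x0 = - of_int q0 / of_int q1"
    have "poly (map_poly of_int q) (of_rat x0 :: complex) = 0"
      unfolding qf x0_def using q1 by (simp add: of_rat_divide of_rat_minus field_simps)
    hence "poly (map_poly of_int p) (of_rat x0 :: complex) = 0" using as(5) by (simp add: of_int_poly_hom.hom_mult)
    hence "of_rat x0 = \<gamma> \<or> of_rat x0 = \<gamma>'" by (rule roots)
    thus False using gq g'q by (metis Rats_of_rat)
  qed
  have irr_p: "irreducible p" using irreducible_primitive_connect[of p] irrd cp by (simp add: primitive_iff_content_eq_1)
  have lp: "lead_coeff p > 0" using degp a'pos unfolding a'_def by simp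
  have rootg: "poly (map_poly of_int p) \<gamma> = 0" unfolding peq by (simp add: algebra_simps)
  have rootg': "poly (map_poly of_int p) \<gamma>' = 0" unfolding peq by (simp add: algebra_simps)
  have mp: "min_int_poly \<gamma> = p" by (rule min_int_poly_eqI[OF irr_p cp lp rootg])
  have M: "mahler_measure \<gamma> = of_int a' * max 1 (cmod \<gamma>) * max 1 (cmod \<gamma>')"
    unfolding Defs.mahler_measure_def mp using mahler_quad[OF peq] a'pos by simp
  define \<delta> where "\<delta> = 2 * of_int A * \<alpha> + of_int B"
  define D where "D = B^2 - 4*A*C"
  define q0 :: rat where "q0 = of_int a' * s / of_int A"
  have "\<alpha> - \<alpha>' = 2*\<alpha> + of_rat b" unfolding \<alpha>'_def by simp
  have dl: "\<delta> = of_int A * (2*\<alpha> + of_rat b)" unfolding \<delta>_def ofb using Ane by (simp add: field_simps)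
  have "of_int a' * (\<gamma> - \<gamma>') = of_int a' * of_rat s * (\<alpha> - \<alpha>')" unfolding g \<gamma>'_def by (simp add: algebra_simps)
  also have "\<dots> = of_int a' * of_rat s * (2*\<alpha> + of_rat b)" unfolding \<alpha>'_def by (simp add: algebra_simps)
  also have "\<dots> = of_rat q0 * \<delta>" unfolding dl q0_def using Ane by (simp add: of_rat_mult of_rat_divide field_simps)
  finally have W: "of_int a' * (\<gamma> - \<gamma>') = of_rat q0 * \<delta>" .
  have "\<delta>^2 = 4 * of_int A * (of_int A * \<alpha>^2 + of_int B * \<alpha> + of_int C) + of_int D"
    unfolding \<delta>_def D_def by (simp add: power2_eq_square algebra_simps)
  hence d2: "\<delta>^2 = of_int D" using rel by simp
  have "(of_int a' * (\<gamma> - \<gamma>'))^2 = (of_int a' * (\<gamma> + \<gamma>'))^2 - 4 * of_int a' * (of_int a' * (\<gamma> * \<gamma>'))"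
    by (simp add: power2_eq_square algebra_simps)
  also have "\<dots> = of_int (b'^2 - 4*a'*c')" unfolding Tc Nc' by simp
  finally have "(of_rat q0 * \<delta>)^2 = of_int (b'^2 - 4*a'*c')" unfolding W .
  hence "(of_rat (q0^2 * of_int D) :: complex) = of_rat (of_int (b'^2 - 4*a'*c'))"
    using d2 by (simp add: of_rat_mult of_rat_power power_mult_distrib del: of_int_diff of_int_mult of_int_power)
  hence qz: "q0^2 * of_int D = of_int (b'^2 - 4*a'*c')" by (simp only: of_rat_eq_iff)
  have a1: "1 \<le> real_of_int a'" using a'pos by simp
  have Mge: "mahler_measure \<gamma> \<ge> 1"
  proof -
    have "1 * 1 * 1 \<le> real_of_int a' * max 1 (cmod \<gamma>) * max 1 (cmod \<gamma>')"
      using a1 by (intro mult_mono) auto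
    thus ?thesis unfolding M by simp
  qed
  have cnjroot: "cnj \<gamma> = \<gamma> \<or> cnj \<gamma> = \<gamma>'" using roots[of "cnj \<gamma>"] poly_of_int_cnj[of p \<gamma>] rootg by simp
  have cnjroot': "cnj \<gamma>' = \<gamma>' \<or> cnj \<gamma>' = \<gamma>" using roots[of "cnj \<gamma>'"] poly_of_int_cnj[of p \<gamma>'] rootg' by auto
  have gen: "good \<delta> D (mahler_measure \<gamma>)"
    if uv: "(u = \<gamma> \<and> v = \<gamma>' \<and> qq = q0) \<or> (u = \<gamma>' \<and> v = \<gamma> \<and> qq = -q0)" and u1: "cmod u > 1" and v1: "cmod v < 1"
    for u v qq
  proof -
    have sum: "of_int a' * (u + v) = - (of_int b' :: complex)" using uv Tc by (auto simp: add.commute)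
    have Wuv: "of_int a' * (u - v) = of_rat qq * \<delta>" using uv W by (auto simp: of_rat_minus algebra_simps)
    have qq2: "qq^2 * of_int D = of_int (b'^2 - 4*a'*c')" using uv qz by auto
    have Mu: "mahler_measure \<gamma> = of_int a' * cmod u" using uv u1 v1 unfolding M by auto
    have cu: "cnj u = u \<or> cnj u = v" using uv cnjroot cnjroot' by auto
    have "cnj u \<noteq> v" using u1 v1 by (metis complex_mod_cnj less_asym)
    hence "cnj u = u" using cu by simp
    hence ur: "u = of_real (Re u)" by (metis Reals_cnj_iff of_real_Re)
    have cu: "cmod u = \<bar>Re u\<bar>" using ur by (metis norm_of_real)
    have u2: "2 * of_int a' * u = - of_int b' + of_rat qq * \<delta>"
    proof -
      have "2 * of_int a' * u = of_int a' * (u + v) + of_int a' * (u - v)" by (simp add: algebra_simps)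
      thus ?thesis unfolding sum Wuv .
    qed
    have v2: "2 * of_int a' * v = - of_int b' - of_rat qq * \<delta>"
    proof -
      have "2 * of_int a' * v = of_int a' * (u + v) - of_int a' * (u - v)" by (simp add: algebra_simps)
      thus ?thesis unfolding sum Wuv .
    qed
    have cv: "cmod (2 * of_int a' * v) \<le> 2 * mahler_measure \<gamma>"
    proof -
      have "cmod (2 * of_int a' * v) = 2 * of_int a' * cmod v" using a'pos by (simp add: norm_mult)
      also have "\<dots> \<le> 2 * of_int a' * cmod u" using u1 v1 a'pos by simp
      finally show ?thesis unfolding Mu by simp
    qed
    show ?thesis unfolding good_def
    proof (intro conjI Mge)
      show "\<exists>e::int. \<exists>q::rat. \<exists>z::int. complex_of_real (2 * mahler_measure \<gamma>) = of_int e + of_rat q * \<delta> \<and>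
         q^2 * of_int D = of_int z \<and> cmod (of_int e - of_rat q * \<delta>) \<le> 2 * mahler_measure \<gamma>"
      proof (cases "Re u > 0")
        case True
        have "complex_of_real (2 * mahler_measure \<gamma>) = 2 * of_int a' * complex_of_real (Re u)"
          unfolding Mu cu using True by simp
        also have "\<dots> = 2 * of_int a' * u" by (simp only: ur[symmetric])
        finally have "complex_of_real (2 * mahler_measure \<gamma>) = 2 * of_int a' * u" .
        hence "complex_of_real (2 * mahler_measure \<gamma>) = of_int (-b') + of_rat qq * \<delta>" using u2 by simp
        moreover have "cmod (of_int (-b') - of_rat qq * \<delta>) \<le> 2 * mahler_measure \<gamma>" using cv v2 by simp
        ultimately show ?thesis using qq2 by blast
      next
        case False
        have "\<bar>Re u\<bar> > 1" using u1 cu by simp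
        hence "Re u < 0" using False by arith
        hence "complex_of_real (2 * mahler_measure \<gamma>) = - (2 * of_int a' * complex_of_real (Re u))"
          unfolding Mu cu by simp
        also have "\<dots> = - (2 * of_int a' * u)" by (simp only: ur[symmetric])
        finally have "complex_of_real (2 * mahler_measure \<gamma>) = - (2 * of_int a' * u)" .
        hence "complex_of_real (2 * mahler_measure \<gamma>) = of_int b' + of_rat (-qq) * \<delta>" using u2 by (simp add: of_rat_minus)
        moreover have "cmod (of_int b' - of_rat (-qq) * \<delta>) \<le> 2 * mahler_measure \<gamma>"
        proof -
          have "of_int b' - of_rat (-qq) * \<delta> = - (2 * of_int a' * v)" using v2 by (simp add: of_rat_minus)
          thus ?thesis using cv by (simp only: norm_minus_cancel)
        qed
        moreover have "(-qq)^2 * of_int D = of_int (b'^2 - 4*a'*c')" using qq2 by simp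
        ultimately show ?thesis by blast
      qed
    qed
  qed
  have "good \<delta> D (mahler_measure \<gamma>)"
  proof -
    consider (a) "cmod \<gamma> \<le> 1 \<and> cmod \<gamma>' \<le> 1" | (b) "cmod \<gamma> \<ge> 1 \<and> cmod \<gamma>' \<ge> 1"
      | (c) "cmod \<gamma> > 1 \<and> cmod \<gamma>' < 1" | (d) "cmod \<gamma> < 1 \<and> cmod \<gamma>' > 1" by linarith
    thus ?thesis
    proof cases
      case a
      hence "mahler_measure \<gamma> = of_int a'" unfolding M by simp
      thus ?thesis using a'pos by (intro good_int) auto
    next
      case b
      hence "mahler_measure \<gamma> = of_int a' * cmod (\<gamma> * \<gamma>')" unfolding M by (simp add: norm_mult)
      also have "\<dots> = cmod (of_int a' * (\<gamma> * \<gamma>'))" using a'pos by (simp add: norm_mult)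
      also have "\<dots> = of_int \<bar>c'\<bar>" unfolding Nc' by simp
      finally have Mc: "mahler_measure \<gamma> = of_int \<bar>c'\<bar>" .
      hence "\<bar>c'\<bar> \<ge> 1" using Mge by simp
      thus ?thesis using Mc by (intro good_int) auto
    next
      case c
      thus ?thesis using gen[of \<gamma> \<gamma>' q0] by simp
    next
      case d
      thus ?thesis using gen[of \<gamma>' \<gamma> "-q0"] by simp
    qed
  qed
  thus ?thesis unfolding \<delta>_def D_def .
qed


lemma good_final:
  assumes "good \<delta> D M1" "good \<delta> D M2" "\<delta>^2 = of_int D" "\<delta> = 0 \<or> \<delta> \<notin> \<rat>" "M1 > M2"
  shows "M1 > M2 + 1 / (16 * M2^4)"
proof -
  obtain e1 q1 z1 where 1: "complex_of_real (2*M1) = of_int e1 + of_rat q1 * \<delta>"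
      "q1^2 * of_int D = of_int z1" "cmod (of_int e1 - of_rat q1 * \<delta>) \<le> 2*M1"
    using assms(1) unfolding good_def by blast
  obtain e2 q2 z2 where 2: "complex_of_real (2*M2) = of_int e2 + of_rat q2 * \<delta>"
      "q2^2 * of_int D = of_int z2" "cmod (of_int e2 - of_rat q2 * \<delta>) \<le> 2*M2"
    using assms(2) unfolding good_def by blast
  have "M2 \<ge> 1" using assms(2) unfolding good_def by blast
  from final_ineq[OF assms(3,4) 1 2 assms(5) this] show ?thesis .
qed

lemma map_of_int_lin: "map_poly (of_int :: int \<Rightarrow> complex) [:a,b:] = [:of_int a, of_int b:]"
  by (rule poly_eqI) (simp add: coeff_map_poly coeff_pCons split: nat.split)

lemma map_of_int_quad: "map_poly (of_int :: int \<Rightarrow> complex) [:a,b,c:] = [:of_int a, of_int b, of_int c:]"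
  by (rule poly_eqI) (simp add: coeff_map_poly coeff_pCons split: nat.split)

lemma Rats_subfield: "is_subfield (\<rat> :: complex set)"
  unfolding is_subfield_def by (auto simp: Rats_add Rats_mult Rats_minus_iff Rats_inverse)

theorem mainTheorem12:
  fixes \<alpha> \<gamma> :: complex
  assumes "algebraic \<alpha>" and "\<alpha> \<noteq> 0" and "alg_degree \<alpha> \<le> 2"
    and "\<gamma> \<in> rat_adjoin \<alpha>" and "\<gamma> \<noteq> 0"
    and "mahler_measure \<gamma> > mahler_measure \<alpha>"
  shows "mahler_measure \<gamma> > mahler_measure \<alpha> + 1 / (16 * mahler_measure \<alpha> ^ 4)"
proof -
  define P where "P = min_int_poly \<alpha>"
  have Pp: "irreducible P" "content P = 1" "lead_coeff P > 0" "poly (map_poly of_int P) \<alpha> = 0"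
    using min_int_poly_props[OF assms(1)] unfolding P_def by auto
  have dle: "degree P \<le> 2" using assms(3) unfolding alg_degree_def P_def .
  have dnz: "degree P \<noteq> 0"
  proof
    assume "degree P = 0"
    then obtain c where "P = [:c:]" by (metis degree_eq_zeroE)
    thus False using Pp(3,4) by simp
  qed
  show ?thesis
  proof (cases "degree P = 1")
    case True
    define c0 where "c0 = poly.coeff P 0"
    define c1 where "c1 = poly.coeff P 1"
    have "P \<noteq> 0" using dnz by auto
    hence "lead_coeff P \<noteq> 0" by simp
    hence c1: "c1 \<noteq> 0" using True unfolding c1_def by simp
    have Pf: "P = [:c0, c1:]" using poly_deg1_eq[of P] True unfolding c0_def c1_def by simp
    have "of_int c0 + of_int c1 * \<alpha> = 0" using Pp(4) unfolding Pf map_of_int_lin by (simp add: mult.commute)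
    hence "of_int c1 * \<alpha> = - of_int c0" by (subst eq_neg_iff_add_eq_0) (simp add: add.commute)
    hence "\<alpha> = - of_int c0 / of_int c1" using c1 by (simp add: field_simps)
    hence "\<alpha> = of_rat (- of_int c0 / of_int c1)" by (simp add: of_rat_divide of_rat_minus)
    hence aQ: "\<alpha> \<in> \<rat>" by simp
    have "rat_adjoin \<alpha> \<subseteq> \<rat>" unfolding rat_adjoin_def using Rats_subfield aQ by blast
    hence gQ: "\<gamma> \<in> \<rat>" using assms(4) by blast
    obtain ga where ga: "\<alpha> = of_rat ga" using aQ by (metis Rats_cases)
    obtain gg where gg: "\<gamma> = of_rat gg" using gQ by (metis Rats_cases)
    have "ga \<noteq> 0" "gg \<noteq> 0" using assms(2,5) ga gg by auto
    then obtain k1 k2 where "mahler_measure \<gamma> = of_int k1" "k1 \<ge> 1" "mahler_measure \<alpha> = of_int k2" "k2 \<ge> 1"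
      using rat_case[of gg] rat_case[of ga] ga gg by blast
    hence "good 0 0 (mahler_measure \<gamma>)" "good 0 0 (mahler_measure \<alpha>)" by (auto intro: good_int)
    from good_final[OF this] assms(6) show ?thesis by simp
  next
    case False
    hence d2: "degree P = 2" using dle dnz by simp
    define C where "C = poly.coeff P 0"
    define B where "B = poly.coeff P 1"
    define A where "A = poly.coeff P 2"
    have A0: "A > 0" using Pp(3) d2 unfolding A_def by simp
    have Pf: "P = [:C, B, A:]" using poly_deg2_eq[of P] d2 unfolding A_def B_def C_def by simp
    have "of_int C + \<alpha> * (of_int B + \<alpha> * of_int A) = 0" using Pp(4) unfolding Pf map_of_int_quad by simp
    hence rel: "of_int A * \<alpha>^2 + of_int B * \<alpha> + of_int C = 0" by (simp add: algebra_simps power2_eq_square)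
    have irr: "\<alpha> \<notin> \<rat>"
    proof
      assume "\<alpha> \<in> \<rat>"
      then obtain ga where ga: "\<alpha> = of_rat ga" by (metis Rats_cases)
      have "ga \<noteq> 0" using assms(2) ga by auto
      hence "degree (min_int_poly \<alpha>) = 1" using rat_case[of ga] ga by blast
      thus False using d2 unfolding P_def by simp
    qed
    define b where "b = (of_int B / of_int A :: rat)"
    define c where "c = (of_int C / of_int A :: rat)"
    have Ane: "(of_int A :: complex) \<noteq> 0" using A0 by simp
    have rel2: "\<alpha>^2 + of_rat b * \<alpha> + of_rat c = 0"
    proof -
      have "of_int A * (\<alpha>^2 + of_rat b * \<alpha> + of_rat c) = of_int A * \<alpha>^2 + of_int B * \<alpha> + of_int C"
        unfolding b_def c_def using Ane by (simp add: of_rat_divide algebra_simps)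
      thus ?thesis using rel Ane by simp
    qed
    obtain r s where rs: "\<gamma> = of_rat r + of_rat s * \<alpha>"
      using rat_adjoin_repr[OF rel2 irr] assms(4) by blast
    define \<delta> where "\<delta> = 2 * of_int A * \<alpha> + of_int B"
    define D where "D = B^2 - 4*A*C"
    have "\<delta>^2 = 4 * of_int A * (of_int A * \<alpha>^2 + of_int B * \<alpha> + of_int C) + of_int D"
      unfolding \<delta>_def D_def by (simp add: power2_eq_square algebra_simps)
    hence dD: "\<delta>^2 = of_int D" using rel by simp
    have dQ: "\<delta> \<notin> \<rat>"
    proof
      assume "\<delta> \<in> \<rat>"
      then obtain y where y: "\<delta> = of_rat y" by (metis Rats_cases)
      have "\<alpha> = of_rat ((y - of_int B) / (2 * of_int A))" using y Ane unfolding \<delta>_def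
        by (simp add: of_rat_divide of_rat_diff of_rat_mult field_simps)
      thus False using irr by simp
    qed
    have ga: "good \<delta> D (mahler_measure \<alpha>)"
      using quad_case[OF A0 rel irr, of \<alpha> 0 1] unfolding \<delta>_def D_def by simp
    have gg: "good \<delta> D (mahler_measure \<gamma>)"
    proof (cases "s = 0")
      case True
      hence "\<gamma> = of_rat r" using rs by simp
      moreover have "r \<noteq> 0" using assms(5) True rs by auto
      ultimately obtain k where "mahler_measure \<gamma> = of_int k" "k \<ge> 1" using rat_case[of r] by blast
      thus ?thesis by (rule good_int)
    next
      case False
      show ?thesis using quad_case[OF A0 rel irr rs False] unfolding \<delta>_def D_def .
    qed
    show ?thesis using good_final[OF gg ga dD _ assms(6)] dQ by blast
  qed
qed

end
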